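(* Let $(u,g,r)$ be a symmetric RUM-CF and let $(p,f)$ be an SCF-RT generated by it, i.e. rationalized by $(u,g,r)$. Then for any $(x,y)\in D$, with $q=p(x,y)/p(y,x)$: if $u(x)\geq u(y)$ then $F(y,x)$ $q$-FSD $F(x,y)$, and if $u(x)>u(y)$ then $F(y,x)$ $q$-SFSD $F(x,y)$.
   Context: $X$ is a finite set of options; $C=\{(x,y): x,y\in X,\ x\neq y\}$; $D\subseteq C$ is a fixed non-empty set with $(x,y)\in D\Rightarrow (y,x)\in D$. An SCF $p$ assigns to each $(x,y)\in D$ a number $p(x,y)>0$ with $p(x,y)+p(y,x)=1$. An SCF-RT is a pair $(p,f)$ where $p$ is an SCF and $f$ assigns to each $(x,y)\in D$ a strictly positive density $f(x,y)$ on $\mathbb{R}^+$ with cdf $F(x,y)$. A RUM is a pair $(u,g)$ with $u:X\to\mathbb{R}$ and $g$ assigning to each $(x,y)\in C$ a density $g(x,y)$ on $\mathbb{R}$ (cdf $G(x,y)$) with $\int v\,g(x,y)(v)\,dv=u(x)-u(y)=:v(x,y)$, $g(x,y)(v)=g(y,x)(-v)$ for all $v$, and connected support. A RUM-CF is $(u,g,r)$ with $(u,g)$ a RUM and $r:\mathbb{R}^{++}\to\mathbb{R}^+$ continuous, strictly decreasing where $r(v)>0$, $\lim_{v\to0}r(v)=\infty$, $\lim_{v\to\infty}r(v)=0$; $r^{-1}(t)$ ($t>0$) is the inverse of $r$ restricted to $\{r>0\}$. It rationalizes $(p,f)$ if for all $(x,y)\in D$: $G(x,y)(0)=p(y,x)$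 and $\frac{1-G(x,y)(r^{-1}(t))}{1-G(x,y)(0)}=F(x,y)(t)$ for all $t>0$. It is symmetric if $g(x,y)(v(x,y)+\delta)=g(x,y)(v(x,y)-\delta)$ for all $(x,y)\in C$, $\delta\geq0$. For cdfs $G,H$ on $\mathbb{R}^+$ and $q>0$, $G$ $q$-FSD $H$ means $G(t)\leq qH(t)$ for all $t\geq0$; $q$-SFSD means additionally strict inequality for some $t$. *)

theory Defs
  imports "HOL-Analysis.Analysis"
begin

definition pos_density :: "(real \<Rightarrow> real) \<Rightarrow> bool" where
  "pos_density h \<longleftrightarrow> (\<forall>t\<ge>0. 0 < h t) \<and> (h has_integral 1) {0..}"

definition cdf_pos :: "(real \<Rightarrow> real) \<Rightarrow> real \<Rightarrow> real" where
  "cdf_pos h t = integral {0..t} h"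

definition real_density :: "(real \<Rightarrow> real) \<Rightarrow> bool" where
  "real_density g \<longleftrightarrow> (\<forall>v. 0 \<le> g v) \<and> (g has_integral 1) UNIV"

definition cdf_real :: "(real \<Rightarrow> real) \<Rightarrow> real \<Rightarrow> real" where
  "cdf_real g v = integral {..v} g"

definition is_SCF :: "('a \<times> 'a) set \<Rightarrow> ('a \<Rightarrow> 'a \<Rightarrow> real) \<Rightarrow> bool" where
  "is_SCF D p \<longleftrightarrow> (\<forall>(x,y)\<in>D. 0 < p x y \<and> p x y + p y x = 1)"

definition is_SCF_RT ::
  "('a \<times> 'a) set \<Rightarrow> ('a \<Rightarrow> 'a \<Rightarrow> real) \<Rightarrow> ('a \<Rightarrow> 'a \<Rightarrow> real \<Rightarrow> real) \<Rightarrow> bool" where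
  "is_SCF_RT D p f \<longleftrightarrow> is_SCF D p \<and> (\<forall>(x,y)\<in>D. pos_density (f x y))"

definition is_RUM :: "('a \<Rightarrow> real) \<Rightarrow> ('a \<Rightarrow> 'a \<Rightarrow> real \<Rightarrow> real) \<Rightarrow> bool" where
  "is_RUM u g \<longleftrightarrow> (\<forall>x y. x \<noteq> y \<longrightarrow>
      real_density (g x y)
    \<and> (\<lambda>v. v * g x y v) absolutely_integrable_on UNIV
    \<and> integral UNIV (\<lambda>v. v * g x y v) = u x - u y
    \<and> (\<forall>v. g x y v = g y x (- v))
    \<and> connected {v. 0 < g x y v})"

definition is_CF :: "(real \<Rightarrow> real) \<Rightarrow> bool" where
  "is_CF r \<longleftrightarrow> continuous_on {0<..} r
    \<and> (\<forall>v>0. 0 \<le> r v)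
    \<and> (\<forall>v w. 0 < v \<longrightarrow> v < w \<longrightarrow> 0 < r v \<longrightarrow> 0 < r w \<longrightarrow> r w < r v)
    \<and> filterlim r at_top (at_right 0)
    \<and> (r \<longlongrightarrow> 0) at_top"

definition rinv :: "(real \<Rightarrow> real) \<Rightarrow> real \<Rightarrow> real" where
  "rinv r t = (THE v. 0 < v \<and> 0 < r v \<and> r v = t)"

definition is_RUM_CF ::
  "('a \<Rightarrow> real) \<Rightarrow> ('a \<Rightarrow> 'a \<Rightarrow> real \<Rightarrow> real) \<Rightarrow> (real \<Rightarrow> real) \<Rightarrow> bool" where
  "is_RUM_CF u g r \<longleftrightarrow> is_RUM u g \<and> is_CF r"

definition rationalizes ::
  "('a \<Rightarrow> real) \<Rightarrow> ('a \<Rightarrow> 'a \<Rightarrow> real \<Rightarrow> real) \<Rightarrow> (real \<Rightarrow> real) \<Rightarrow>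
   ('a \<times> 'a) set \<Rightarrow> ('a \<Rightarrow> 'a \<Rightarrow> real) \<Rightarrow> ('a \<Rightarrow> 'a \<Rightarrow> real \<Rightarrow> real) \<Rightarrow> bool" where
  "rationalizes u g r D p f \<longleftrightarrow> (\<forall>(x,y)\<in>D.
      cdf_real (g x y) 0 = p y x
    \<and> (\<forall>t>0. (1 - cdf_real (g x y) (rinv r t)) / (1 - cdf_real (g x y) 0)
              = cdf_pos (f x y) t))"

definition symmetric_RUM_CF :: "('a \<Rightarrow> real) \<Rightarrow> ('a \<Rightarrow> 'a \<Rightarrow> real \<Rightarrow> real) \<Rightarrow> bool" where
  "symmetric_RUM_CF u g \<longleftrightarrow> (\<forall>x y. x \<noteq> y \<longrightarrow>
      (\<forall>\<delta>\<ge>0. g x y (u x - u y + \<delta>) = g x y (u x - u y - \<delta>)))"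

definition q_FSD :: "(real \<Rightarrow> real) \<Rightarrow> real \<Rightarrow> (real \<Rightarrow> real) \<Rightarrow> bool" where
  "q_FSD G q H \<longleftrightarrow> (\<forall>t\<ge>0. G t \<le> q * H t)"

definition q_SFSD :: "(real \<Rightarrow> real) \<Rightarrow> real \<Rightarrow> (real \<Rightarrow> real) \<Rightarrow> bool" where
  "q_SFSD G q H \<longleftrightarrow> q_FSD G q H \<and> (\<exists>t\<ge>0. G t < q * H t)"

end

theory Submission
  imports Defs
begin
lemma integral_pos_aux:
  fixes f :: "real \<Rightarrow> real"
  assumes fi: "f integrable_on {a..b}" and ab: "a < b" and pos: "\<And>x. x \<in> {a..b} \<Longrightarrow> 0 < f x"
  shows "0 < integral {a..b} f"
proof -
  have ai: "f absolutely_integrable_on {a..b}"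
    using fi pos by (intro nonnegative_absolutely_integrable_1) (auto intro: less_imp_le)
  have int: "integrable (lebesgue_on {a..b}) f"
    using ai by (simp add: set_integrable_def integrable_restrict_space)
  have eq: "integral\<^sup>L (lebesgue_on {a..b}) f = integral {a..b} f"
    using int by (intro lebesgue_integral_eq_integral) auto
  have ge: "integral {a..b} f \<ge> 0"
    using fi pos by (intro integral_nonneg) (auto intro: less_imp_le)
  have "integral\<^sup>L (lebesgue_on {a..b}) f \<noteq> 0"
  proof
    assume "integral\<^sup>L (lebesgue_on {a..b}) f = 0"
    then have "AE x in lebesgue_on {a..b}. f x = 0"
    proof -
      have "AE x in lebesgue_on {a..b}. 0 \<le> f x"
        by (rule AE_I2) (simp add: less_imp_le pos)
      then show ?thesis using integral_nonneg_eq_0_iff_AE[OF int] \<open>integral\<^sup>L (lebesgue_on {a..b}) f = 0\<close> by blast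
    qed
    then have "AE x in lebesgue_on {a..b}. False"
      proof (rule AE_mp)
      have npos: "\<And>x. x \<in> space (lebesgue_on {a..b}) \<Longrightarrow> f x \<noteq> 0"
        using pos by (simp add: space_restrict_space) (metis less_irrefl)
      show "AE x in lebesgue_on {a..b}. f x = 0 \<longrightarrow> False"
        by (rule AE_I2) (use npos in blast)
    qed
    then have "emeasure (lebesgue_on {a..b}) {a..b} = 0"
      by (subst (asm) AE_iff_measurable[of "{a..b}"]) (auto simp: space_restrict_space sets_restrict_space_iff)
    then show False using ab by (simp add: emeasure_restrict_space)
  qed
  then show ?thesis using eq ge by simp
qed

lemma dens_ai:
  assumes "real_density h" "S \<in> sets lebesgue"
  shows "h absolutely_integrable_on S"
proof -
  have "h integrable_on UNIV" "\<And>x. 0 \<le> h x" using assms(1) unfolding real_density_def by auto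
  then have "h absolutely_integrable_on UNIV" by (intro nonnegative_absolutely_integrable_1) auto
  then show ?thesis using assms(2) by (rule set_integrable_subset) auto
qed

lemma dens_int:
  assumes "real_density h" "S \<in> sets lebesgue"
  shows "h integrable_on S"
  using dens_ai[OF assms] set_lebesgue_integral_eq_integral(1) by blast

lemma cdf_split:
  assumes "real_density h"
  shows "cdf_real h a = 1 - integral {a<..} h"
proof -
  have "(h has_integral (cdf_real h a + integral {a<..} h)) ({..a} \<union> {a<..})"
    unfolding cdf_real_def
  proof (rule has_integral_Un)
    have "{..a} \<inter> {a<..} = ({}::real set)" by auto
    then show "negligible ({..a} \<inter> {a<..})" by simp
  qed (auto intro!: integrable_integral dens_int[OF assms])
  moreover have "{..a} \<union> {a<..} = (UNIV :: real set)" by auto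
  moreover have "(h has_integral 1) UNIV" using assms unfolding real_density_def by auto
  ultimately have "(h has_integral (cdf_real h a + integral {a<..} h)) UNIV" by simp
  from has_integral_unique[OF this \<open>(h has_integral 1) UNIV\<close>] show ?thesis by linarith
qed

lemma split2:
  assumes "real_density h" "a \<le> b"
  shows "integral {a<..} h = integral {a<..b} h + integral {b<..} h"
proof -
  have "(h has_integral (integral {a<..b} h + integral {b<..} h)) ({a<..b} \<union> {b<..})"
  proof (rule has_integral_Un)
    have "{a<..b} \<inter> {b<..} = ({}::real set)" by auto
    then show "negligible ({a<..b} \<inter> {b<..})" by simp
  qed (auto intro!: integrable_integral dens_int[OF assms(1)])
  moreover have "{a<..b} \<union> {b<..} = {a<..}" using assms(2) by auto
  ultimately have "(h has_integral (integral {a<..b} h + integral {b<..} h)) {a<..}" by simp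
  then show ?thesis by (rule integral_unique)
qed

lemma shift_int:
  fixes h :: "real \<Rightarrow> real"
  assumes "real_density h"
  shows "integral {s<..} (\<lambda>w. h (c + w)) = integral {c+s<..} h"
proof -
  have img: "(\<lambda>x. c + x) ` {s<..} = {c+s<..}"
    by (auto simp: image_iff intro!: bexI[where x="_ - c"])
  have ai: "h absolutely_integrable_on (\<lambda>x. c + x) ` {s<..}"
    unfolding img by (rule dens_ai[OF assms]) auto
  have "(\<lambda>x. \<bar>1::real\<bar> *\<^sub>R h (c + x)) absolutely_integrable_on {s<..} \<and>
        integral {s<..} (\<lambda>x. \<bar>1::real\<bar> *\<^sub>R h (c + x)) = integral ((\<lambda>x. c + x) ` {s<..}) h
    \<longleftrightarrow> h absolutely_integrable_on (\<lambda>x. c + x) ` {s<..} \<and> integral ((\<lambda>x. c + x) ` {s<..}) h = integral ((\<lambda>x. c + x) ` {s<..}) h"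
  proof (rule has_absolute_integral_change_of_variables_real)
    show "((+) c has_field_derivative 1) (at x within {s<..})" for x
      by (rule derivative_eq_intros refl)+ simp
    show "inj_on ((+) c) {s<..}" by (simp add: inj_on_def)
  qed simp
  with ai img show ?thesis by simp
qed


theorem proposition4:
  fixes D :: "('a::finite \<times> 'a) set"
    and p :: "'a \<Rightarrow> 'a \<Rightarrow> real"
    and f :: "'a \<Rightarrow> 'a \<Rightarrow> real \<Rightarrow> real"
    and u :: "'a \<Rightarrow> real"
    and g :: "'a \<Rightarrow> 'a \<Rightarrow> real \<Rightarrow> real"
    and r :: "real \<Rightarrow> real"
  assumes D_sub: "D \<subseteq> {(x, y). x \<noteq> y}"
    and D_ne: "D \<noteq> {}"
    and D_sym: "\<forall>(x, y)\<in>D. (y, x) \<in> D"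
    and SCFRT: "is_SCF_RT D p f"
    and RUMCF: "is_RUM_CF u g r"
    and symm: "symmetric_RUM_CF u g"
    and rat: "rationalizes u g r D p f"
    and xy: "(x, y) \<in> D"
  shows "(u x \<ge> u y \<longrightarrow> q_FSD (cdf_pos (f y x)) (p x y / p y x) (cdf_pos (f x y)))
       \<and> (u x > u y \<longrightarrow> q_SFSD (cdf_pos (f y x)) (p x y / p y x) (cdf_pos (f x y)))"
proof -
  define g0 where "g0 = g x y"
  define v0 where "v0 = u x - u y"
  define T where "T a = integral {a<..} g0" for a
  have xny: "x \<noteq> y" using D_sub xy by auto
  have yx: "(y, x) \<in> D" using D_sym xy by auto
  have RUM: "is_RUM u g" and CF: "is_CF r" using RUMCF unfolding is_RUM_CF_def by blast+
  have Rxy: "real_density (g x y) \<and> (\<lambda>v. v * g x y v) absolutely_integrable_on UNIV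
    \<and> integral UNIV (\<lambda>v. v * g x y v) = u x - u y
    \<and> (\<forall>v. g x y v = g y x (- v)) \<and> connected {v. 0 < g x y v}"
    by (rule mp[OF spec[OF spec[OF RUM[unfolded is_RUM_def]]]]) (use xny in simp)
  have Ryx: "real_density (g y x) \<and> (\<lambda>v. v * g y x v) absolutely_integrable_on UNIV
    \<and> integral UNIV (\<lambda>v. v * g y x v) = u y - u x
    \<and> (\<forall>v. g y x v = g x y (- v)) \<and> connected {v. 0 < g y x v}"
    by (rule mp[OF spec[OF spec[OF RUM[unfolded is_RUM_def]]]]) (use xny in simp)
  have dens0: "real_density g0" using Rxy unfolding g0_def by blast
  have densyx: "real_density (g y x)" using Ryx by blast
  have conn: "connected {v. 0 < g0 v}" using Rxy unfolding g0_def by blast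
  have g0nn: "\<And>v. 0 \<le> g0 v" using dens0 unfolding real_density_def by blast
  have h1: "(g0 has_integral 1) UNIV" using dens0 unfolding real_density_def by blast
  have gyx0: "g y x w = g0 (- w)" for w
    using Ryx unfolding g0_def by blast
  have SY: "\<forall>\<delta>\<ge>0. g0 (v0 + \<delta>) = g0 (v0 - \<delta>)"
    using symm xny unfolding symmetric_RUM_CF_def g0_def v0_def by blast
  have refl0: "g0 (2 * v0 - w) = g0 w" for w
  proof (cases "w \<ge> v0")
    case True
    then have "w - v0 \<ge> 0" by simp
    then have "g0 (v0 + (w - v0)) = g0 (v0 - (w - v0))" using SY by blast
    then show ?thesis by (simp add: algebra_simps mult_2)
  next
    case False
    then have "v0 - w \<ge> 0" by simp
    then have "g0 (v0 + (v0 - w)) = g0 (v0 - (v0 - w))" using SY by blast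
    then show ?thesis by (simp add: algebra_simps mult_2)
  qed
  have gyx: "g y x = (\<lambda>w. g0 (2 * v0 + w))"
  proof
    fix w show "g y x w = g0 (2 * v0 + w)" using gyx0 refl0[of "- w"] by simp
  qed
  have SCF: "is_SCF D p" using SCFRT by (simp add: is_SCF_RT_def)
  have pxy: "0 < p x y" "p x y + p y x = 1" using SCF xy unfolding is_SCF_def by auto
  have pyx: "0 < p y x" using SCF yx unfolding is_SCF_def by auto
  have rxy: "cdf_real g0 0 = p y x"
    "\<And>t. t > 0 \<Longrightarrow> (1 - cdf_real g0 (rinv r t)) / (1 - cdf_real g0 0) = cdf_pos (f x y) t"
    using rat xy unfolding rationalizes_def g0_def by auto
  have ryx: "cdf_real (g y x) 0 = p x y"
    "\<And>t. t > 0 \<Longrightarrow> (1 - cdf_real (g y x) (rinv r t)) / (1 - cdf_real (g y x) 0) = cdf_pos (f y x) t"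
    using rat yx unfolding rationalizes_def by auto
  have Fxy: "cdf_pos (f x y) t = T (rinv r t) / p x y" if "t > 0" for t
  proof -
    have a: "1 - cdf_real g0 (rinv r t) = T (rinv r t)" using cdf_split[OF dens0] unfolding T_def by simp
    have b: "1 - cdf_real g0 0 = p x y" using rxy(1) pxy(2) by linarith
    show ?thesis using rxy(2)[OF that] unfolding a b by simp
  qed
  have Fyx: "cdf_pos (f y x) t = T (2 * v0 + rinv r t) / p y x" if "t > 0" for t
  proof -
    have "1 - cdf_real (g y x) (rinv r t) = integral {rinv r t<..} (g y x)"
      using cdf_split[OF densyx] by simp
    also have "\<dots> = T (2 * v0 + rinv r t)" unfolding gyx T_def by (rule shift_int[OF dens0])
    finally have a: "1 - cdf_real (g y x) (rinv r t) = T (2 * v0 + rinv r t)" .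
    have b: "1 - cdf_real (g y x) 0 = p y x" using ryx(1) pxy(2) by linarith
    show ?thesis using ryx(2)[OF that] unfolding a b by simp
  qed
  have cdf0: "cdf_pos h 0 = 0" for h unfolding cdf_pos_def by simp
  have Tsplit: "T s = integral {s<..2 * v0 + s} g0 + T (2 * v0 + s)" if "v0 \<ge> 0" for s
    unfolding T_def using that by (intro split2[OF dens0]) auto
  have Imid: "integral {s<..2 * v0 + s} g0 \<ge> 0" for s
    by (rule integral_nonneg) (auto intro: dens_int[OF dens0] g0nn)
  have FSD: "q_FSD (cdf_pos (f y x)) (p x y / p y x) (cdf_pos (f x y))" if "v0 \<ge> 0"
    unfolding q_FSD_def
  proof (intro allI impI)
    fix t :: real assume "t \<ge> 0"
    show "cdf_pos (f y x) t \<le> p x y / p y x * cdf_pos (f x y) t"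
    proof (cases "t = 0")
      case True then show ?thesis by (simp add: cdf0)
    next
      case False
      then have tp: "t > 0" using \<open>t \<ge> 0\<close> by simp
      have "T (2 * v0 + rinv r t) \<le> T (rinv r t)"
        using Tsplit[OF that, of "rinv r t"] Imid[of "rinv r t"] by linarith
      then show ?thesis using Fxy[OF tp] Fyx[OF tp] pxy pyx
        by (simp add: divide_right_mono)
    qed
  qed
  show ?thesis
  proof (intro conjI impI)
    assume "u y \<le> u x" then show "q_FSD (cdf_pos (f y x)) (p x y / p y x) (cdf_pos (f x y))"
      using FSD by (simp add: v0_def)
  next
    assume "u y < u x"
    then have v0p: "v0 > 0" by (simp add: v0_def)
    show "q_SFSD (cdf_pos (f y x)) (p x y / p y x) (cdf_pos (f x y))"
      unfolding q_SFSD_def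
    proof (intro conjI)
      show "q_FSD (cdf_pos (f y x)) (p x y / p y x) (cdf_pos (f x y))" using FSD v0p by simp
      have "\<exists>w1 w2. w1 < w2 \<and> 0 < g0 w1 \<and> 0 < g0 w2"
      proof (rule ccontr)
        assume nex: "\<not> ?thesis"
        have "negligible {v. 0 < g0 v}"
        proof (cases "{v. 0 < g0 v} = {}")
          case True then show ?thesis by simp
        next
          case False
          then obtain w where w: "0 < g0 w" by auto
          have "{v. 0 < g0 v} \<subseteq> {w}"
          proof
            fix v assume "v \<in> {v. 0 < g0 v}"
            then have "0 < g0 v" by simp
            then show "v \<in> {w}" using nex w by (cases v w rule: linorder_cases) auto
          qed
          then show ?thesis by (rule negligible_subset[rotated]) simp
        qed
        then have "(g0 has_integral 0) UNIV"
        proof (rule has_integral_spike[where f="\<lambda>_. 0"])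
          show "\<And>v. v \<in> UNIV - {v. 0 < g0 v} \<Longrightarrow> g0 v = 0" using g0nn
            by (metis DiffD2 mem_Collect_eq order_le_less)
        qed simp
        from has_integral_unique[OF this h1] show False by simp
      qed
      then obtain w1 w2 where w12: "w1 < w2" "0 < g0 w1" "0 < g0 w2" by blast
      obtain a b where ab: "a < v0" "v0 < b" "0 < g0 a" "0 < g0 b"
      proof (cases "w1 < v0")
        case True
        show ?thesis by (rule that[of w1 "2 * v0 - w1"]) (use True w12 refl0 in auto)
      next
        case False
        show ?thesis by (rule that[of "2 * v0 - w2" w2]) (use False w12 refl0 in auto)
      qed
      have inP: "0 < g0 z" if "a \<le> z" "z \<le> b" for z
        using conn ab that unfolding connected_iff_interval by blast
      have "\<forall>\<^sub>F s in at_right 0. 0 < r s"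
        using CF unfolding is_CF_def filterlim_at_top_dense by blast
      then obtain e where e: "e > 0" "\<And>s. 0 < s \<Longrightarrow> s < e \<Longrightarrow> 0 < r s"
        unfolding eventually_at_right_field by auto
      define s0 where "s0 = min (e / 2) (v0 / 2)"
      have s0: "0 < s0" "s0 < e" "s0 < v0" "0 < r s0" using e v0p by (auto simp: s0_def)
      define eta where "eta = min (min (v0 - a) (b - v0)) (v0 - s0) / 2"
      have eta: "0 < eta" "eta < v0 - s0" "eta \<le> v0 - a" "eta \<le> b - v0"
        using ab s0 by (auto simp: eta_def)
      have rinv0: "rinv r (r s0) = s0"
        unfolding rinv_def
      proof (rule the_equality)
        show "0 < s0 \<and> 0 < r s0 \<and> r s0 = r s0" using s0 by simp
      next
        fix v assume v: "0 < v \<and> 0 < r v \<and> r v = r s0"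
        have mono: "\<And>v w. 0 < v \<Longrightarrow> v < w \<Longrightarrow> 0 < r v \<Longrightarrow> 0 < r w \<Longrightarrow> r w < r v"
          using CF unfolding is_CF_def by blast
        show "v = s0"
        proof (cases v s0 rule: linorder_cases)
          case less then show ?thesis using mono[of v s0] v s0 by auto
        next
          case greater then show ?thesis using mono[of s0 v] v s0 by auto
        qed
      qed
      have sub: "{v0 - eta..v0 + eta} \<subseteq> {s0<..2 * v0 + s0}" using eta s0 by auto
      have pos: "0 < integral {v0 - eta..v0 + eta} g0"
        by (rule integral_pos_aux) (use eta in \<open>auto intro: dens_int[OF dens0] inP\<close>)
      have "integral {v0 - eta..v0 + eta} g0 \<le> integral {s0<..2 * v0 + s0} g0"
        by (rule integral_subset_le[OF sub]) (auto intro: dens_int[OF dens0] g0nn)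
      then have Tlt: "T (2 * v0 + s0) < T s0" using Tsplit[of s0] v0p pos by linarith
      have tp: "r s0 > 0" using s0 by simp
      show "\<exists>t\<ge>0. cdf_pos (f y x) t < p x y / p y x * cdf_pos (f x y) t"
      proof (intro exI conjI)
        show "0 \<le> r s0" using tp by simp
        show "cdf_pos (f y x) (r s0) < p x y / p y x * cdf_pos (f x y) (r s0)"
          using Fxy[OF tp] Fyx[OF tp] rinv0 pxy pyx Tlt by (simp add: divide_strict_right_mono)
      qed
    qed
  qed
qed

end
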